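(* Let $S$ be an entropy function for a finite set $X$, $X'\subset X$, and $S'(A):=\min_{\hat A\subseteq X\setminus X'}S(A\cup\hat A)$ for $A\subseteq X'$. For $f':X'\to\mathbb R$ let $f_{f'}:X\to\mathbb R$ equal $f'$ on $X'$ and $0$ on $X\setminus X'$. Then $f'$ is an EDF for $S'$ if and only if $f_{f'}$ is an EDF for $S$.
   Context: An entropy function for a finite set $X$ is a function $S:2^X\to[0,\infty)$ with $S(\emptyset)=0$, $S(A)+S(B)\ge S(A\cap B)+S(A\cup B)$ and $S(A)+S(B)\ge S(A\setminus B)+S(B\setminus A)$ for all $A,B\subseteq X$. An entanglement distribution function (EDF) for $S$ is a function $f:X\to\mathbb R$ with $\big|\sum_{x\in A}f(x)\big|\le S(A)$ for all $A\subseteq X$. *)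

theory Defs
  imports "HOL-Analysis.Analysis"
begin

definition entropy_function :: "'a set \<Rightarrow> ('a set \<Rightarrow> real) \<Rightarrow> bool" where
  "entropy_function X S \<longleftrightarrow> finite X \<and> S {} = 0 \<and>
     (\<forall>A. A \<subseteq> X \<longrightarrow> S A \<ge> 0) \<and>
     (\<forall>A B. A \<subseteq> X \<longrightarrow> B \<subseteq> X \<longrightarrow> S A + S B \<ge> S (A \<inter> B) + S (A \<union> B)) \<and>
     (\<forall>A B. A \<subseteq> X \<longrightarrow> B \<subseteq> X \<longrightarrow> S A + S B \<ge> S (A - B) + S (B - A))"

definition EDF :: "'a set \<Rightarrow> ('a set \<Rightarrow> real) \<Rightarrow> ('a \<Rightarrow> real) \<Rightarrow> bool" where
  "EDF X S f \<longleftrightarrow> (\<forall>A. A \<subseteq> X \<longrightarrow> \<bar>\<Sum>x\<in>A. f x\<bar> \<le> S A)"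

definition reduced_entropy :: "'a set \<Rightarrow> 'a set \<Rightarrow> ('a set \<Rightarrow> real) \<Rightarrow> 'a set \<Rightarrow> real" where
  "reduced_entropy X X' S A = Min ((\<lambda>H. S (A \<union> H)) ` Pow (X - X'))"

definition zero_ext :: "'a set \<Rightarrow> ('a \<Rightarrow> real) \<Rightarrow> 'a \<Rightarrow> real" where
  "zero_ext X' f x = (if x \<in> X' then f x else 0)"

end

theory Submission
  imports Defs
begin

theorem proposition27:
  fixes X X' :: "'a set" and S :: "'a set \<Rightarrow> real" and f' :: "'a \<Rightarrow> real"
  assumes "entropy_function X S"
    and "X' \<subseteq> X"
  shows "EDF X' (reduced_entropy X X' S) f' \<longleftrightarrow> EDF X S (zero_ext X' f')"
proof
  have finX: "finite X" using assms(1) unfolding entropy_function_def by blast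
  have finP: "finite ((\<lambda>H. S (A \<union> H)) ` Pow (X - X'))" for A using finX by simp
  have sumz: "(\<Sum>x\<in>A. zero_ext X' f' x) = (\<Sum>x\<in>A \<inter> X'. f' x)" if "finite A" for A
  proof -
    have "(\<Sum>x\<in>A. zero_ext X' f' x) = (\<Sum>x\<in>A. if x \<in> X' then f' x else 0)"
      unfolding zero_ext_def by simp
    also have "\<dots> = (\<Sum>x\<in>A \<inter> X'. f' x)"
      using that by (simp add: sum.If_cases Int_def)
    finally show ?thesis .
  qed
  {
    assume e: "EDF X' (reduced_entropy X X' S) f'"
    show "EDF X S (zero_ext X' f')"
      unfolding EDF_def
    proof (intro allI impI)
      fix A assume A: "A \<subseteq> X"
      have fA: "finite A" using A finX finite_subset by blast
      have "\<bar>\<Sum>x\<in>A \<inter> X'. f' x\<bar> \<le> reduced_entropy X X' S (A \<inter> X')"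
        using e unfolding EDF_def by blast
      also have "\<dots> \<le> S ((A \<inter> X') \<union> (A - X'))"
        unfolding reduced_entropy_def
        by (rule Min_le[OF finP]) (use A in auto)
      also have "(A \<inter> X') \<union> (A - X') = A" by blast
      finally show "\<bar>\<Sum>x\<in>A. zero_ext X' f' x\<bar> \<le> S A" using sumz[OF fA] by simp
    qed
  }
  {
    assume e: "EDF X S (zero_ext X' f')"
    show "EDF X' (reduced_entropy X X' S) f'"
      unfolding EDF_def
    proof (intro allI impI)
      fix A assume A: "A \<subseteq> X'"
      have "\<bar>\<Sum>x\<in>A. f' x\<bar> \<le> Min ((\<lambda>H. S (A \<union> H)) ` Pow (X - X'))"
      proof (rule Min.boundedI[OF finP])
        show "(\<lambda>H. S (A \<union> H)) ` Pow (X - X') \<noteq> {}" by blast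
      next
        fix y assume "y \<in> (\<lambda>H. S (A \<union> H)) ` Pow (X - X')"
        then obtain H where H: "H \<subseteq> X - X'" and y: "y = S (A \<union> H)" by blast
        have sub: "A \<union> H \<subseteq> X" using A H assms(2) by blast
        have fin: "finite (A \<union> H)" using sub finX finite_subset by blast
        have "(A \<union> H) \<inter> X' = A" using A H by blast
        then have "(\<Sum>x\<in>A \<union> H. zero_ext X' f' x) = (\<Sum>x\<in>A. f' x)" using sumz[OF fin] by simp
        then show "\<bar>\<Sum>x\<in>A. f' x\<bar> \<le> y" using e sub y unfolding EDF_def by metis
      qed
      then show "\<bar>\<Sum>x\<in>A. f' x\<bar> \<le> reduced_entropy X X' S A"
        unfolding reduced_entropy_def .
    qed
  }
qed

end
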